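(* With $\mathbf{Y}_\mathrm{l},\mathbf{Y}_\mathrm{e}$ as in the context and $g(\mathbf{v})=\frac{\mathbf{v}^H\mathbf{Y}_\mathrm{l}\mathbf{v}}{\mathbf{v}^H\mathbf{Y}_\mathrm{e}\mathbf{v}}$, let $\mathbf{v}^{(t)}\in\mathbb{C}^M$ satisfy $|v^{(t)}_i|=1$ for all $i$, let $$\mathbf{w}^{(t)}=\frac{\mathbf{Y}_\mathrm{l}\mathbf{v}^{(t)}}{(\mathbf{v}^{(t)})^H\mathbf{Y}_\mathrm{e}\mathbf{v}^{(t)}}-\frac{(\mathbf{v}^{(t)})^H\mathbf{Y}_\mathrm{l}\mathbf{v}^{(t)}}{[(\mathbf{v}^{(t)})^H\mathbf{Y}_\mathrm{e}\mathbf{v}^{(t)}]^2}\big[\mathbf{Y}_\mathrm{e}-\lambda_{\max}(\mathbf{Y}_\mathrm{e})\mathbf{I}_M\big]\mathbf{v}^{(t)},$$ and let $\mathbf{v}^{(t+1)}$ be any vector with $|v^{(t+1)}_i|=1$ for all $i$ and $v^{(t+1)}_i=w^{(t)}_i/|w^{(t)}_i|$ whenever $w^{(t)}_i\ne0$. Then $g(\mathbf{v}^{(t+1)})\ge g(\mathbf{v}^{(t)})$.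
   Context: Let $M,N_t\ge1$, $P\ge0$, $\sigma_\mathrm{l}^2,\sigma_\mathrm{e}^2>0$, $\mathbf{R}_\mathrm{l},\mathbf{R}_\mathrm{e}\in\mathbb{C}^{M\times N_t}$, $\mathbf{f}\in\mathbb{C}^{N_t}$, and $\mathbf{Y}_i=\frac1M\mathbf{I}_M+\frac{P}{\sigma_i^2}\mathbf{R}_i\mathbf{f}\mathbf{f}^H\mathbf{R}_i^H$ for $i\in\{\mathrm{l},\mathrm{e}\}$. $\lambda_{\max}$ denotes the largest eigenvalue of a Hermitian matrix. *)

theory Defs
  imports "HOL-Analysis.Analysis"
begin

definition ctrans :: "complex^'n^'m \<Rightarrow> complex^'m^'n" where
  "ctrans A = (\<chi> i j. cnj (A $ j $ i))"

definition hform :: "complex^'m^'m \<Rightarrow> complex^'m \<Rightarrow> complex" where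
  "hform A v = (\<Sum>i\<in>UNIV. cnj (v $ i) * ((A *v v) $ i))"

definition outer :: "complex^'m \<Rightarrow> complex^'n \<Rightarrow> complex^'n^'m" where
  "outer x y = (\<chi> i j. x $ i * cnj (y $ j))"

text \<open>Largest eigenvalue of a Hermitian matrix (its eigenvalues are real).\<close>
definition lambda_max :: "complex^'m^'m \<Rightarrow> real" where
  "lambda_max A = Max {x::real. \<exists>v. v \<noteq> 0 \<and> A *v v = complex_of_real x *s v}"

definition Ymat :: "real \<Rightarrow> real \<Rightarrow> complex^'n^'m \<Rightarrow> complex^'n \<Rightarrow> complex^'m^'m" where
  "Ymat P s2 R f = (\<chi> i j. (mat (1 / of_nat CARD('m)) :: complex^'m^'m) $ i $ j
      + complex_of_real (P / s2) * (R ** outer f f ** ctrans R) $ i $ j)"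

text \<open>The objective g(v) = (v^H Yl v) / (v^H Ye v) (a real number since both forms are real).\<close>
definition gobj :: "complex^'m^'m \<Rightarrow> complex^'m^'m \<Rightarrow> complex^'m \<Rightarrow> real" where
  "gobj Yl Ye v = Re (hform Yl v / hform Ye v)"

end

theory Submission
  imports Defs
begin

definition ip :: "complex^'m \<Rightarrow> complex^'m \<Rightarrow> complex" where
  "ip y x = (\<Sum>i\<in>UNIV. cnj (y$i) * x$i)"

lemma Ymat_entry: "Ymat P s2 R f $ i $ j = (if i = j then 1/of_nat CARD('m) else 0)
   + complex_of_real (P/s2) * ((R *v f)$i * cnj ((R *v f)$j))"
  for R :: "complex^'n^'m"
  by (simp add: Ymat_def mat_def matrix_matrix_mult_def matrix_vector_mult_def outer_def ctrans_def
      sum_distrib_left sum_distrib_right sum_product mult_ac)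

lemma gen_mv:
  fixes Y :: "complex^'m^'m"
  assumes "\<And>i j. Y $ i $ j = (if i = j then a else 0) + c * (u$i * cnj (u$j))"
  shows "Y *v x = a *s x + (c * ip u x) *s u"
proof -
  have "(Y *v x) $ i = a * x$i + c * ip u x * u $ i" for i
  proof -
    have "(Y *v x) $ i = (\<Sum>j\<in>UNIV. (if i = j then a * x$j else 0) + c * u$i * (cnj (u$j) * x$j))"
      by (auto simp: matrix_vector_mult_def assms algebra_simps intro!: sum.cong)
    also have "\<dots> = a * x$i + c * u$i * ip u x"
      by (simp add: sum.distrib ip_def sum_distrib_left)
    finally show ?thesis by (simp add: mult_ac)
  qed
  then show ?thesis by (simp add: vec_eq_iff)
qed

lemma Ymat_mv: "Ymat P s2 R f *v x = complex_of_real (1/real CARD('m)) *s x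
    + (complex_of_real (P/s2) * ip (R *v f) x) *s (R *v f)"
  for R :: "complex^'n^'m"
  by (rule gen_mv) (simp add: Ymat_entry)

lemma ip_add2: "ip y (a *s x + b *s z) = a * ip y x + b * ip y z"
  by (simp add: ip_def sum.distrib sum_distrib_left algebra_simps)
lemma ip_scale1: "ip (a *s y + b *s z) x = cnj a * ip y x + cnj b * ip z x"
  by (simp add: ip_def sum.distrib sum_distrib_left algebra_simps)
lemma ip_diff1: "ip (y - z) x = ip y x - ip z x"
  by (simp add: ip_def sum_subtractf algebra_simps)
lemma ip_diff2: "ip y (x - z) = ip y x - ip y z"
  by (simp add: ip_def sum_subtractf algebra_simps)
lemma ip_cnj: "cnj (ip y x) = ip x y"
  by (simp add: ip_def mult.commute)
lemma ip_self: "ip u u = complex_of_real (\<Sum>i\<in>UNIV. (cmod (u$i))^2)"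
proof -
  have "ip u u = (\<Sum>i\<in>UNIV. complex_of_real ((cmod (u$i))^2))"
    unfolding ip_def by (rule sum.cong) (simp_all add: complex_norm_square[symmetric] mult.commute del: of_real_power)
  then show ?thesis by simp
qed

lemma lmax_ge:
  fixes R :: "complex^'n^'m"
  shows "lambda_max (Ymat P s2 R f) \<ge> 1/real CARD('m) + P/s2 * (\<Sum>i\<in>UNIV. (cmod ((R *v f)$i))^2)"
proof -
  define u where "u = R *v f"
  define a where "a = 1/real CARD('m)"
  define c where "c = P/s2"
  define N where "N = (\<Sum>i\<in>UNIV. (cmod (u$i))^2)"
  define S where "S = {x::real. \<exists>v. v \<noteq> 0 \<and> Ymat P s2 R f *v v = complex_of_real x *s v}"
  have mv: "Ymat P s2 R f *v x = complex_of_real a *s x + (complex_of_real c * ip u x) *s u" for x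
    using Ymat_mv[of P s2 R f x] by (simp add: u_def a_def c_def)
  have sub: "S \<subseteq> {a, a + c * N}"
  proof
    fix x assume "x \<in> S"
    then obtain v where v0: "v \<noteq> 0" and ev: "Ymat P s2 R f *v v = complex_of_real x *s v"
      unfolding S_def by blast
    show "x \<in> {a, a + c * N}"
    proof (cases "x = a")
      case True then show ?thesis by simp
    next
      case False
      define k where "k = complex_of_real c * ip u v"
      have xa: "complex_of_real x - complex_of_real a \<noteq> 0" using False by simp
      have comp: "v $ i = k * u $ i / (complex_of_real x - complex_of_real a)" for i
      proof -
        have "complex_of_real x * v$i = complex_of_real a * v$i + k * u$i"
          using arg_cong[OF ev, of "\<lambda>y. y $ i"] by (simp add: mv k_def)
        then have "(complex_of_real x - complex_of_real a) * v$i = k * u$i"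
          by (simp add: algebra_simps)
        then show ?thesis using xa by (simp add: field_simps)
      qed
      have "ip u v = k * ip u u / (complex_of_real x - complex_of_real a)"
        by (simp add: ip_def comp sum_divide_distrib sum_distrib_left mult_ac)
      then have eq: "ip u v * (complex_of_real x - complex_of_real a) = complex_of_real c * ip u v * complex_of_real N"
        using xa by (simp add: k_def ip_self N_def field_simps)
      have "ip u v \<noteq> 0"
      proof
        assume "ip u v = 0"
        then have "k = 0" by (simp add: k_def)
        then have "v = 0" using comp by (simp add: vec_eq_iff)
        then show False using v0 by simp
      qed
      moreover have "ip u v * complex_of_real (x - a - c * N) = 0"
        using eq by (simp add: algebra_simps)
      ultimately have "complex_of_real (x - a - c * N) = 0" by simp
      then have "x - a - c * N = 0" by (simp only: of_real_eq_0_iff)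
      then have "x = a + c * N" by simp
      then show ?thesis by simp
    qed
  qed
  have mem: "a + c * N \<in> S"
  proof (cases "u = 0")
    case True
    then have N0: "N = 0" by (simp add: N_def)
    define e :: "complex^'m" where "e = (\<chi> i. 1)"
    have "e \<noteq> 0" by (simp add: e_def vec_eq_iff)
    moreover have "Ymat P s2 R f *v e = complex_of_real (a + c * N) *s e"
      by (simp add: mv True N0)
    ultimately show ?thesis unfolding S_def by blast
  next
    case False
    have "Ymat P s2 R f *v u = complex_of_real (a + c * N) *s u"
      by (simp add: mv ip_self N_def[symmetric] algebra_simps)
    then show ?thesis unfolding S_def using False by blast
  qed
  have "finite S" using sub by (rule finite_subset) simp
  then have "a + c * N \<le> Max S" using mem by (rule Max_ge)
  then show ?thesis by (simp add: lambda_max_def S_def a_def c_def N_def u_def)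
qed

lemma mat_mv: "(mat c :: complex^'m^'m) *v x = c *s x"
proof -
  have "(\<Sum>j\<in>UNIV. (mat c :: complex^'m^'m) $ i $ j * x$j) = (\<Sum>j\<in>UNIV. if i = j then c * x$j else 0)" for i
    by (rule sum.cong) (auto simp: mat_def)
  then show ?thesis by (simp add: vec_eq_iff matrix_vector_mult_def)
qed

lemma diffmat_mv: "(X - mat c :: complex^'m^'m) *v x = X *v x - c *s x"
  by (simp add: matrix_vector_mult_diff_rdistrib mat_mv)

lemma ip_lin_diff: "ip (a *s y - b *s z) x = cnj a * ip y x - cnj b * ip z x"
  by (simp add: ip_def sum_subtractf sum_distrib_left algebra_simps)

lemma ip_scale: "ip (a *s y) x = cnj a * ip y x"
  by (simp add: ip_def sum_distrib_left algebra_simps)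

lemma ip_lin_diff2: "ip (y - b *s z) x = ip y x - cnj b * ip z x"
  by (simp add: ip_def sum_subtractf sum_distrib_left algebra_simps)

lemma cmod_sq_expand: "(cmod x)^2 = (cmod y)^2 + 2 * Re (cnj y * (x - y)) + (cmod (x - y))^2"
  by (simp add: cmod_power2) (simp add: power2_eq_square algebra_simps)

lemma hform_ip: "hform A x = ip x (A *v x)"
  by (simp add: hform_def ip_def)

lemma hform_Y:
  fixes R :: "complex^'n^'m"
  assumes "ip x x = complex_of_real m"
  shows "hform (Ymat P s2 R f) x = complex_of_real (1/real CARD('m) * m + P/s2 * (cmod (ip (R *v f) x))^2)"
proof -
  have "hform (Ymat P s2 R f) x = complex_of_real (1/real CARD('m)) * ip x x
      + complex_of_real (P/s2) * (ip (R *v f) x * cnj (ip (R *v f) x))"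
    by (simp add: hform_ip Ymat_mv ip_add2[of x "complex_of_real (1/real CARD('m))" x _ "R *v f", simplified] ip_cnj mult_ac)
  also have "\<dots> = complex_of_real (1/real CARD('m) * m + P/s2 * (cmod (ip (R *v f) x))^2)"
    by (simp add: assms complex_norm_square[symmetric] del: of_real_power)
  finally show ?thesis .
qed

lemma ip_unit: fixes v :: "complex^'m" assumes "\<forall>i. cmod (v $ i) = 1" shows "ip v v = complex_of_real (real CARD('m))"
  using assms by (simp add: ip_self)

lemma cs_ip: "(cmod (ip z d))^2 \<le> (\<Sum>i\<in>UNIV. (cmod (z$i))^2) * (\<Sum>i\<in>UNIV. (cmod (d$i))^2)"
proof -
  have "cmod (ip z d) \<le> (\<Sum>i\<in>UNIV. cmod (z$i) * cmod (d$i))"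
    unfolding ip_def by (rule order_trans[OF norm_sum]) (simp add: norm_mult)
  then have "(cmod (ip z d))^2 \<le> (\<Sum>i\<in>UNIV. cmod (z$i) * cmod (d$i))^2"
    by (rule power_mono) simp
  also have "\<dots> \<le> (\<Sum>i\<in>UNIV. (cmod (z$i))^2) * (\<Sum>i\<in>UNIV. (cmod (d$i))^2)"
    by (rule Cauchy_Schwarz_ineq_sum)
  finally show ?thesis .
qed

lemma final_real:
  fixes al cl ce lam M pp qq pp' qq' P1 Q1 R1 g a b a' b' :: real
  assumes b: "b > 0" and g: "g = a / b"
    and a_def: "a = al * M + cl * pp" and b_def: "b = al * M + ce * qq"
    and a'_def: "a' = al * M + cl * pp'" and b'_def: "b' = al * M + ce * qq'"
    and b': "b' > 0"
    and cl: "cl \<ge> 0" and al: "al \<ge> 0" and g0: "g \<ge> 0"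
    and h1: "pp' \<ge> 2 * P1 - pp"
    and h2: "ce * qq' \<le> (lam - al) * (2 * M - 2 * R1) + ce * (2 * Q1 - qq)"
    and h3: "al * R1 + cl * P1 - g * (al * R1 + ce * Q1 - lam * R1) \<ge> al * M + cl * pp - g * (al * M + ce * qq - lam * M)"
    and h4: "R1 \<le> M"
  shows "a' / b' \<ge> a / b"
proof -
  have gb: "g * b = a" using g b by simp
  have m1: "cl * pp' \<ge> cl * (2 * P1 - pp)" using h1 cl by (rule mult_left_mono)
  have m2: "g * (ce * qq') \<le> g * ((lam - al) * (2 * M - 2 * R1) + ce * (2 * Q1 - qq))"
    using h2 g0 by (rule mult_left_mono)
  have m3: "al * (M - R1) \<ge> 0" using al h4 by simp
  have "a' - g * b' \<ge> 0"
    using m1 m2 m3 h3 gb unfolding a'_def b'_def a_def b_def by (simp add: algebra_simps)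
  then have "a' \<ge> g * b'" by simp
  then have "a' / b' \<ge> g" using b' by (simp add: field_simps)
  then show ?thesis using g by simp
qed

theorem mainTheorem5:
  fixes Rl Re' :: "complex^'n^'m" and f :: "complex^'n"
    and P sl2 se2 :: real and v w v' :: "complex^'m"
  assumes "P \<ge> 0" and "sl2 > 0" and "se2 > 0"
    and "\<forall>i. cmod (v $ i) = 1"
    and "w = (1 / hform (Ymat P se2 Re' f) v) *s (Ymat P sl2 Rl f *v v)
             - (hform (Ymat P sl2 Rl f) v / (hform (Ymat P se2 Re' f) v)^2) *s
               ((Ymat P se2 Re' f - mat (complex_of_real (lambda_max (Ymat P se2 Re' f)))) *v v)"
    and "\<forall>i. cmod (v' $ i) = 1"
    and "\<forall>i. w $ i \<noteq> 0 \<longrightarrow> v' $ i = w $ i / complex_of_real (cmod (w $ i))"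
  shows "gobj (Ymat P sl2 Rl f) (Ymat P se2 Re' f) v' \<ge> gobj (Ymat P sl2 Rl f) (Ymat P se2 Re' f) v"
proof -
  define A where "A = Ymat P sl2 Rl f"
  define B where "B = Ymat P se2 Re' f"
  define M where "M = real CARD('m)"
  define al where "al = 1 / real CARD('m)"
  define cl where "cl = P / sl2"
  define ce where "ce = P / se2"
  define u where "u = Rl *v f"
  define z where "z = Re' *v f"
  define lam where "lam = lambda_max B"
  define p where "p = ip u v"
  define q where "q = ip z v"
  define p' where "p' = ip u v'"
  define q' where "q' = ip z v'"
  define a where "a = al * M + cl * (cmod p)^2"
  define b where "b = al * M + ce * (cmod q)^2"
  define a' where "a' = al * M + cl * (cmod p')^2"
  define b' where "b' = al * M + ce * (cmod q')^2"
  define R1 where "R1 = Re (ip v v')"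
  define P1 where "P1 = Re (cnj p * p')"
  define Q1 where "Q1 = Re (cnj q * q')"
  define Nz where "Nz = (\<Sum>i\<in>UNIV. (cmod (z$i))^2)"
  have M1: "M \<ge> 1" unfolding M_def
    using finite_UNIV_card_ge_0[where 'a='m] by simp
  have al0: "al > 0" by (simp add: al_def)
  have alM: "al * M > 0" using al0 M1 by simp
  have cl0: "cl \<ge> 0" using assms(1,2) by (simp add: cl_def)
  have ce0: "ce \<ge> 0" using assms(1,3) by (simp add: ce_def)
  have ipv: "ip v v = complex_of_real M" using ip_unit[OF assms(4)] by (simp add: M_def)
  have ipv': "ip v' v' = complex_of_real M" using ip_unit[OF assms(6)] by (simp add: M_def)
  have hA: "hform A v = complex_of_real a"
    using hform_Y[OF ipv, of P sl2 Rl f] by (simp add: A_def a_def al_def cl_def p_def u_def M_def)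
  have hB: "hform B v = complex_of_real b"
    using hform_Y[OF ipv, of P se2 Re' f] by (simp add: B_def b_def al_def ce_def q_def z_def M_def)
  have hA': "hform A v' = complex_of_real a'"
    using hform_Y[OF ipv', of P sl2 Rl f] by (simp add: A_def a'_def al_def cl_def p'_def u_def M_def)
  have hB': "hform B v' = complex_of_real b'"
    using hform_Y[OF ipv', of P se2 Re' f] by (simp add: B_def b'_def al_def ce_def q'_def z_def M_def)
  have b0: "b > 0" using alM ce0 by (simp add: b_def add_pos_nonneg)
  have b'0: "b' > 0" using alM ce0 by (simp add: b'_def add_pos_nonneg)
  have a0: "a \<ge> 0" using alM cl0 by (simp add: a_def)
  have gv: "gobj A B v = a / b" by (simp add: gobj_def hA hB flip: of_real_divide)
  have gv': "gobj A B v' = a' / b'" by (simp add: gobj_def hA' hB' flip: of_real_divide)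
  have Av: "A *v v = complex_of_real al *s v + (complex_of_real cl * p) *s u"
    by (simp add: A_def Ymat_mv al_def cl_def p_def u_def)
  have Bv: "B *v v = complex_of_real al *s v + (complex_of_real ce * q) *s z"
    by (simp add: B_def Ymat_mv al_def ce_def q_def z_def)
  have wdef: "w = complex_of_real (1/b) *s (A *v v) - complex_of_real (a/b^2) *s (B *v v - complex_of_real lam *s v)"
    using assms(5) by (simp add: A_def[symmetric] B_def[symmetric] lam_def[symmetric] hA hB diffmat_mv)
  have ipw: "ip w x = complex_of_real (1/b) * (complex_of_real al * ip v x + complex_of_real cl * cnj p * ip u x)
     - complex_of_real (a/b^2) * (complex_of_real al * ip v x + complex_of_real ce * cnj q * ip z x - complex_of_real lam * ip v x)" for x
  proof -
    have iA: "ip (A *v v) x = complex_of_real al * ip v x + complex_of_real cl * cnj p * ip u x"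
      unfolding Av ip_scale1 by simp
    have iB: "ip (B *v v) x = complex_of_real al * ip v x + complex_of_real ce * cnj q * ip z x"
      unfolding Bv ip_scale1 by simp
    show ?thesis unfolding wdef ip_diff1 ip_scale ip_lin_diff2 iA iB by simp
  qed
  have Fw: "b * Re (ip w x) = al * Re (ip v x) + cl * Re (cnj p * ip u x)
     - (a/b) * (al * Re (ip v x) + ce * Re (cnj q * ip z x) - lam * Re (ip v x))" for x
    using b0 by (simp add: ipw field_simps power2_eq_square)
  have phase: "Re (ip w v) \<le> Re (ip w v')"
  proof -
    have "Re (cnj (w$i) * v$i) \<le> Re (cnj (w$i) * v'$i)" for i
    proof (cases "w$i = 0")
      case True then show ?thesis by simp
    next
      case False
      have "Re (cnj (w$i) * v$i) \<le> cmod (cnj (w$i) * v$i)" by (rule complex_Re_le_cmod)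
      also have "\<dots> = cmod (w$i)" using assms(4) by (simp add: norm_mult)
      also have "\<dots> = Re (cnj (w$i) * v'$i)"
      proof -
        have "cnj (w$i) * v'$i = cnj (w$i) * w$i / complex_of_real (cmod (w$i))"
          using assms(7) False by simp
        also have "\<dots> = complex_of_real ((cmod (w$i))^2) / complex_of_real (cmod (w$i))"
          by (simp add: complex_norm_square mult.commute del: of_real_power)
        also have "\<dots> = complex_of_real (cmod (w$i))"
          using False by (simp add: power2_eq_square del: of_real_power)
        finally show ?thesis by simp
      qed
      finally show ?thesis .
    qed
    then show ?thesis unfolding ip_def Re_sum by (rule sum_mono)
  qed
  have ipvv': "ip v v = complex_of_real M" by (rule ipv)
  have cpp: "Re (cnj p * p) = (cmod p)^2"
    by (metis Re_complex_of_real complex_norm_square mult.commute)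
  have cqq: "Re (cnj q * q) = (cmod q)^2"
    by (metis Re_complex_of_real complex_norm_square mult.commute)
  have h3: "al * R1 + cl * P1 - (a/b) * (al * R1 + ce * Q1 - lam * R1)
       \<ge> al * M + cl * (cmod p)^2 - (a/b) * (al * M + ce * (cmod q)^2 - lam * M)"
  proof -
    have "b * Re (ip w v) \<le> b * Re (ip w v')" using phase b0 by simp
    then show ?thesis unfolding Fw using ipv cpp cqq
      by (simp add: R1_def P1_def Q1_def p_def q_def p'_def q'_def)
  qed
  have h1: "(cmod p')^2 \<ge> 2 * P1 - (cmod p)^2"
  proof -
    have e: "(cmod p')^2 = (cmod p)^2 + 2 * Re (cnj p * (p' - p)) + (cmod (p' - p))^2"
      by (rule cmod_sq_expand)
    have "Re (cnj p * (p' - p)) = P1 - (cmod p)^2"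
      using cpp by (simp add: P1_def algebra_simps)
    then show ?thesis using e by simp
  qed
  have Dsum: "(\<Sum>i\<in>UNIV. (cmod ((v' - v)$i))^2) = 2 * M - 2 * R1"
  proof -
    have "(cmod ((v' - v)$i))^2 = 2 - 2 * Re (cnj (v$i) * v'$i)" for i
    proof -
      have e: "(cmod (v'$i))^2 = (cmod (v$i))^2 + 2 * Re (cnj (v$i) * (v'$i - v$i)) + (cmod (v'$i - v$i))^2"
        by (rule cmod_sq_expand)
      have "Re (cnj (v$i) * v$i) = 1"
        using assms(4) by (metis Re_complex_of_real complex_norm_square mult.commute power_one)
      then have "Re (cnj (v$i) * (v'$i - v$i)) = Re (cnj (v$i) * v'$i) - 1"
        by (simp add: algebra_simps)
      then show ?thesis using e assms(4,6) by simp
    qed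
    then have "(\<Sum>i\<in>UNIV. (cmod ((v' - v)$i))^2) = (\<Sum>i\<in>UNIV. 2 - 2 * Re (cnj (v$i) * v'$i))"
      by simp
    also have "\<dots> = 2 * M - 2 * R1"
      by (simp add: sum_subtractf sum_distrib_left R1_def ip_def Re_sum M_def)
    finally show ?thesis .
  qed
  have h4: "R1 \<le> M"
  proof -
    have "Re (cnj (v$i) * v'$i) \<le> 1" for i
      using complex_Re_le_cmod[of "cnj (v$i) * v'$i"] assms(4,6) by (simp add: norm_mult)
    then have "(\<Sum>i\<in>UNIV. Re (cnj (v$i) * v'$i)) \<le> (\<Sum>i\<in>(UNIV::'m set). 1)"
      by (rule sum_mono)
    then show ?thesis by (simp add: R1_def ip_def Re_sum M_def)
  qed
  have lamge: "lam \<ge> al + ce * Nz"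
    using lmax_ge[of P se2 Re' f] by (simp add: lam_def B_def al_def ce_def Nz_def z_def)
  have h2: "ce * (cmod q')^2 \<le> (lam - al) * (2 * M - 2 * R1) + ce * (2 * Q1 - (cmod q)^2)"
  proof -
    have e: "(cmod q')^2 = (cmod q)^2 + 2 * Re (cnj q * (q' - q)) + (cmod (q' - q))^2"
      by (rule cmod_sq_expand)
    have r: "Re (cnj q * (q' - q)) = Q1 - (cmod q)^2"
      using cqq by (simp add: Q1_def algebra_simps)
    have "q' - q = ip z (v' - v)" by (simp add: q_def q'_def ip_diff2)
    then have cs: "(cmod (q' - q))^2 \<le> Nz * (2 * M - 2 * R1)"
      using cs_ip[of z "v' - v"] Dsum by (simp add: Nz_def)
    have D0: "2 * M - 2 * R1 \<ge> 0" using h4 by simp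
    have "ce * (cmod (q' - q))^2 \<le> ce * (Nz * (2 * M - 2 * R1))"
      using cs ce0 by (rule mult_left_mono)
    also have "\<dots> \<le> (lam - al) * (2 * M - 2 * R1)"
      using lamge D0 by (simp add: mult.assoc[symmetric] mult_right_mono)
    finally have "ce * (cmod (q' - q))^2 \<le> (lam - al) * (2 * M - 2 * R1)" .
    moreover have "(cmod q')^2 = (2 * Q1 - (cmod q)^2) + (cmod (q' - q))^2"
      using e r by linarith
    then have "ce * (cmod q')^2 = ce * (2 * Q1 - (cmod q)^2) + ce * (cmod (q' - q))^2"
      by (simp add: distrib_left)
    ultimately show ?thesis by linarith
  qed
  have "a' / b' \<ge> a / b"
    by (rule final_real[OF b0 refl a_def b_def a'_def b'_def b'0 cl0 less_imp_le[OF al0] _ h1 h2 h3 h4])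
       (use a0 b0 in simp)
  then show ?thesis using gv gv' by (simp add: A_def B_def)
qed
end
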